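(* There exists an aperiodic probability $F\in\mathbb{P}(\mathbb{Z}^+)$ with $\sum_{k\ge0}kF(k)=+\infty$ and $\lim_{\xi\to0}|\mathrm{Arg}(1-\widehat{F}(\xi))|=\pi/2$. Consequently there is no $\theta\in(0,\pi/2)$ such that $\phi_F(w)\in\mathbb{D}\cup\{1\}$ and $1-\phi_F(w)\in\overline{\Lambda}_\theta$ for all $w\in\overline{\mathbb{D}}$, and $F\notin\mathcal{A}$.
   Context: $\mathbb{P}(\mathbb{Z}^+)$ is the set of functions $F:\mathbb{Z}\to[0,1]$ with $\sum F=1$ and $F(k)=0$ for $k<0$. $F$ is adapted if $\mathrm{supp}(F)$ generates the group $\mathbb{Z}$, aperiodic if every translate $\delta_m*F$ ($m\in\mathbb{Z}$) is adapted. $\widehat{F}(\xi)=\sum_kF(k)e^{-ik\xi}$, $\phi_F(w)=\sum_{k\ge0}F(k)w^k$ for $w\in\overline{\mathbb{D}}=\{|w|\le1\}$, $\mathbb{D}=\{|w|<1\}$, $\mathrm{Arg}$ is the principal argument, $\overline{\Lambda}_\theta=\{0\}\cup\{z:|\mathrm{Arg}\,z|\le\theta\}$. $\mathcal{A}=\{F\in\mathbb{P}(\mathbb{Z}^+):\sup_{n\in\mathbb{N}}n\sum_k|F^{(n)}(k)-F^{(n+1)}(k)|<\infty\}$, $F^{(n)}$ the $n$-th convolution power. *)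

theory Defs
  imports "HOL-Analysis.Analysis"
begin

definition PZplus :: "(int \<Rightarrow> real) \<Rightarrow> bool" where
  "PZplus F \<longleftrightarrow> (\<forall>k. 0 \<le> F k \<and> F k \<le> 1) \<and> (F has_sum 1) UNIV \<and> (\<forall>k<0. F k = 0)"

definition supp :: "(int \<Rightarrow> real) \<Rightarrow> int set" where
  "supp F = {k. F k \<noteq> 0}"

definition int_subgroup :: "int set \<Rightarrow> bool" where
  "int_subgroup H \<longleftrightarrow> 0 \<in> H \<and> (\<forall>a\<in>H. \<forall>b\<in>H. a + b \<in> H) \<and> (\<forall>a\<in>H. - a \<in> H)"

definition generated_subgroup :: "int set \<Rightarrow> int set" where
  "generated_subgroup S = \<Inter> {H. int_subgroup H \<and> S \<subseteq> H}"

definition adapted :: "(int \<Rightarrow> real) \<Rightarrow> bool" where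
  "adapted F \<longleftrightarrow> generated_subgroup (supp F) = UNIV"

definition conv :: "(int \<Rightarrow> real) \<Rightarrow> (int \<Rightarrow> real) \<Rightarrow> int \<Rightarrow> real" where
  "conv F G k = (\<Sum>\<^sub>\<infinity>j\<in>UNIV. F j * G (k - j))"

definition delta :: "int \<Rightarrow> int \<Rightarrow> real" where
  "delta m k = (if k = m then 1 else 0)"

fun conv_pow :: "(int \<Rightarrow> real) \<Rightarrow> nat \<Rightarrow> int \<Rightarrow> real" where
  "conv_pow F 0 = delta 0"
| "conv_pow F (Suc n) = conv F (conv_pow F n)"

definition aperiodic :: "(int \<Rightarrow> real) \<Rightarrow> bool" where
  "aperiodic F \<longleftrightarrow> (\<forall>m::int. adapted (conv (delta m) F))"

definition Fhat :: "(int \<Rightarrow> real) \<Rightarrow> real \<Rightarrow> complex" where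
  "Fhat F \<xi> = (\<Sum>\<^sub>\<infinity>k\<in>UNIV. complex_of_real (F k) * exp (- \<i> * of_int k * of_real \<xi>))"

definition phi :: "(int \<Rightarrow> real) \<Rightarrow> complex \<Rightarrow> complex" where
  "phi F w = (\<Sum>k. complex_of_real (F (int k)) * w ^ k)"

definition Lambda_bar :: "real \<Rightarrow> complex set" where
  "Lambda_bar \<theta> = {0} \<union> {z. \<bar>Arg z\<bar> \<le> \<theta>}"

definition classA :: "(int \<Rightarrow> real) set" where
  "classA = {F. PZplus F \<and>
     (\<exists>C. \<forall>n::nat. n \<ge> 1 \<longrightarrow>
        real n * (\<Sum>\<^sub>\<infinity>k\<in>UNIV. \<bar>conv_pow F n k - conv_pow F (Suc n) k\<bar>) \<le> C)}"

end

theory Submission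
  imports Defs "HOL-Real_Asymp.Real_Asymp"
begin


definition Fx :: "int \<Rightarrow> real" where
  "Fx k = (if 2 \<le> k then 1 / (of_int k * (of_int k - 1)) else 0)"

lemma Fx_nat: "Fx (int k) = (if 2 \<le> k then 1 / (real k * (real k - 1)) else 0)"
  by (simp add: Fx_def)

lemma Fx_nonneg: "0 \<le> Fx k"
  by (simp add: Fx_def)

lemma Fx_le1: "Fx k \<le> 1"
proof (cases "2 \<le> k")
  case True
  hence "(2::real) \<le> of_int k" by simp
  hence "2 * 1 \<le> of_int k * (of_int k - (1::real))" by (intro mult_mono) auto
  thus ?thesis using True by (simp add: Fx_def)
qed (simp add: Fx_def)

lemma Fx_partial: "(\<Sum>k<Suc m + 1. Fx (int k)) = 1 - 1 / real (Suc m)"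
proof (induction m)
  case 0
  then show ?case by (simp add: Fx_nat)
next
  case (Suc m)
  have e: "Fx (int (Suc m + 1)) = 1 / ((real m + 2) * (real m + 1))"
    unfolding Fx_def by (simp add: algebra_simps)
  have "(\<Sum>k<Suc (Suc m) + 1. Fx (int k)) = (\<Sum>k<Suc m + 1. Fx (int k)) + Fx (int (Suc m + 1))"
    by (simp only: sum.lessThan_Suc add_Suc)
  also have "\<dots> = 1 - 1 / real (Suc m) + 1 / ((real m + 2) * (real m + 1))"
    by (simp only: Suc.IH e)
  also have "\<dots> = 1 - 1 / real (Suc (Suc m))"
  proof -
    have "1 / (real m + 1) - 1 / ((real m + 2) * (real m + 1)) = 1 / (real m + 2)"
      by (simp add: divide_simps)
    thus ?thesis by (simp add: of_nat_Suc algebra_simps)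
  qed
  finally show ?case .
qed

lemma Fx_sums: "(\<lambda>k. Fx (int k)) sums 1"
proof -
  have "(\<lambda>m. 1 - 1 / real (Suc m)) \<longlonglongrightarrow> 1"
    using tendsto_diff[OF tendsto_const LIMSEQ_inverse_real_of_nat, of 1] by (simp add: inverse_eq_divide)
  hence "(\<lambda>m. \<Sum>k<Suc m + 1. Fx (int k)) \<longlonglongrightarrow> 1" by (simp only: Fx_partial)
  hence "(\<lambda>m. \<Sum>k<m + 2. Fx (int k)) \<longlonglongrightarrow> 1" by simp
  thus ?thesis unfolding sums_def by (rule LIMSEQ_offset)
qed

lemma int_has_sum:
  fixes f :: "int \<Rightarrow> 'a::banach"
  assumes "\<And>k. k < 0 \<Longrightarrow> f k = 0" "summable (\<lambda>n. norm (f (int n)))" "(\<lambda>n. f (int n)) sums S"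
  shows "(f has_sum S) UNIV"
proof -
  have "((f \<circ> int) has_sum S) UNIV"
    using norm_summable_imp_has_sum[OF assms(2)] assms(3) by (simp add: o_def)
  hence "(f has_sum S) (range int)"
    by (subst has_sum_reindex) (auto simp: inj_on_def)
  moreover have "x \<in> UNIV - range int \<Longrightarrow> f x = 0" for x
  proof (cases "x < 0")
    case False
    then obtain n where "x = int n" using nonneg_int_cases[of x] by force
    moreover assume "x \<in> UNIV - range int"
    ultimately show ?thesis by auto
  qed (use assms(1) in auto)
  ultimately show ?thesis
    by (subst has_sum_cong_neutral[where T="range int"]) auto
qed

lemma Fx_summable: "summable (\<lambda>k. Fx (int k))"
  using Fx_sums by (rule sums_summable)

lemma PZplus_Fx: "PZplus Fx"
  unfolding PZplus_def
proof (intro conjI allI impI)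
  show "(Fx has_sum 1) UNIV"
    by (rule int_has_sum) (use Fx_sums Fx_summable Fx_nonneg in \<open>auto simp: Fx_def\<close>)
next
  fix k :: int show "0 \<le> Fx k" by (rule Fx_nonneg)
next
  fix k :: int show "Fx k \<le> 1" by (rule Fx_le1)
next
  fix k :: int assume "k < 0" thus "Fx k = 0" by (simp add: Fx_def)
qed

lemma Fx_not_summable: "\<not> summable (\<lambda>k::nat. real k * Fx (int k))"
proof
  assume s: "summable (\<lambda>k::nat. real k * Fx (int k))"
  have "summable (\<lambda>k::nat. inverse (real (k + 2)))"
  proof (rule summable_comparison_test'[where g="\<lambda>k. real (k+2) * Fx (int (k+2))"])
    show "summable (\<lambda>k. real (k+2) * Fx (int (k+2)))"
      using s by (subst summable_iff_shift) 
    fix k :: nat assume "k \<ge> 0"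
    have "inverse (real (k + 2)) \<le> inverse (real k + 1)" by (simp add: field_simps)
    also have "\<dots> = real (k+2) * Fx (int (k+2))"
    proof -
      have "Fx (int (k+2)) = 1/((real k+2)*(real k+1))" unfolding Fx_def by (simp add: algebra_simps)
      thus ?thesis by (simp add: divide_simps) (simp add: algebra_simps)
    qed
    finally show "norm (inverse (real (k + 2))) \<le> real (k+2) * Fx (int (k+2))" by simp
  qed
  hence "summable (\<lambda>k::nat. inverse (real k))"
    by (subst (asm) summable_iff_shift[where k=2, of "\<lambda>k. inverse (real k)"]) simp
  thus False using not_summable_harmonic by blast
qed

lemma subgroup_one_all:
  assumes "int_subgroup H" "1 \<in> H" shows "x \<in> H"
proof -
  have n: "int n \<in> H" for n
    by (induction n) (use assms in \<open>auto simp: int_subgroup_def\<close>)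
  show ?thesis
  proof (cases "x \<ge> 0")
    case True thus ?thesis using n[of "nat x"] by simp
  next
    case False thus ?thesis using n[of "nat (-x)"] assms(1) unfolding int_subgroup_def
      by (metis add.inverse_inverse nat_0_le neg_0_le_iff_le nle_le)
  qed
qed

lemma conv_delta: "conv (delta m) G k = G (k - m)"
proof -
  have "conv (delta m) G k = (\<Sum>\<^sub>\<infinity>j\<in>{m}. delta m j * G (k - j))"
    unfolding conv_def by (rule infsum_cong_neutral) (auto simp: delta_def)
  thus ?thesis by (simp add: delta_def)
qed

lemma aperiodic_Fx: "aperiodic Fx"
  unfolding aperiodic_def adapted_def
proof
  fix m :: int
  have s: "m + 2 \<in> supp (conv (delta m) Fx)" "m + 3 \<in> supp (conv (delta m) Fx)"
    by (auto simp: supp_def conv_delta Fx_def)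
  show "generated_subgroup (supp (conv (delta m) Fx)) = UNIV"
  proof (rule set_eqI, rule iffI)
    fix x assume "x \<in> (UNIV :: int set)"
    show "x \<in> generated_subgroup (supp (conv (delta m) Fx))"
      unfolding generated_subgroup_def
    proof (rule InterI, clarify)
      fix H assume H: "int_subgroup H" "supp (conv (delta m) Fx) \<subseteq> H"
      hence "m + 3 + - (m + 2) \<in> H" using s unfolding int_subgroup_def by blast
      hence "1 \<in> H" by simp
      thus "x \<in> H" using subgroup_one_all H by blast
    qed
  qed simp
qed



lemma Fx_c_step: "complex_of_real (Fx (int (Suc m + 1))) = 1 / (of_nat m + 1) - 1 / (of_nat m + 2)"
proof -
  have "Fx (int (Suc m + 1)) = 1 / ((real m + 2) * (real m + 1))"
    unfolding Fx_def by (simp add: algebra_simps)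
  also have "\<dots> = 1 / (real m + 1) - 1 / (real m + 2)"
    by (simp add: divide_simps)
  finally show ?thesis by simp
qed

lemma phi_partial:
  fixes w :: complex
  shows "(\<Sum>k<Suc m + 1. complex_of_real (Fx (int k)) * w ^ k)
     = w + (w - 1) * (\<Sum>k<Suc m. w ^ k / of_nat k) - w ^ Suc m / of_nat (Suc m)"
proof (induction m)
  case 0
  then show ?case by (simp add: Fx_def)
next
  case (Suc m)
  have "(\<Sum>k<Suc (Suc m) + 1. complex_of_real (Fx (int k)) * w ^ k)
      = (\<Sum>k<Suc m + 1. complex_of_real (Fx (int k)) * w ^ k) + complex_of_real (Fx (int (Suc m + 1))) * w ^ (Suc m + 1)"
    by (simp only: sum.lessThan_Suc add_Suc)
  also have "\<dots> = w + (w - 1) * (\<Sum>k<Suc m. w ^ k / of_nat k) - w ^ Suc m / of_nat (Suc m)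
       + (1 / (of_nat m + 1) - 1 / (of_nat m + 2)) * w ^ (Suc m + 1)"
    by (simp only: Suc.IH Fx_c_step)
  also have "\<dots> = w + (w - 1) * (\<Sum>k<Suc (Suc m). w ^ k / of_nat k) - w ^ Suc (Suc m) / of_nat (Suc (Suc m))"
    by (simp add: algebra_simps add_divide_distrib diff_divide_distrib)
  finally show ?case .
qed

lemma phi_open:
  fixes w :: complex
  assumes "cmod w < 1"
  shows "phi Fx w = w + (1 - w) * Ln (1 - w)"
proof -
  have "(\<lambda>n. - (w ^ n) / of_nat n) sums Ln (1 - w)"
    using Ln_series'[of "-w"] assms by simp
  hence "(\<lambda>n. (w ^ n) / of_nat n) sums (- Ln (1 - w))"
    using sums_minus by fastforce
  hence L: "(\<lambda>m. \<Sum>k<Suc m. w ^ k / of_nat k) \<longlonglongrightarrow> - Ln (1 - w)"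
    unfolding sums_def by (rule LIMSEQ_Suc)
  have P: "(\<lambda>m. w ^ Suc m / of_nat (Suc m)) \<longlonglongrightarrow> 0"
  proof (rule Lim_null_comparison[where g="\<lambda>m. cmod w ^ Suc m"])
    show "\<forall>\<^sub>F m in sequentially. norm (w ^ Suc m / of_nat (Suc m)) \<le> cmod w ^ Suc m"
    proof (intro always_eventually allI)
      fix m
      have "norm (w ^ Suc m / of_nat (Suc m)) = cmod w ^ Suc m / real (Suc m)"
        by (simp only: norm_divide norm_power norm_of_nat)
      also have "\<dots> \<le> cmod w ^ Suc m"
        using mult_left_mono[of 1 "real (Suc m)" "cmod w ^ Suc m"] by (simp add: divide_le_eq del: of_nat_Suc)
      finally show "norm (w ^ Suc m / of_nat (Suc m)) \<le> cmod w ^ Suc m" .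
    qed
    show "(\<lambda>m. cmod w ^ Suc m) \<longlonglongrightarrow> 0"
      using LIMSEQ_Suc[OF LIMSEQ_power_zero[of "cmod w"]] assms by simp
  qed
  have "(\<lambda>m. \<Sum>k<Suc m + 1. complex_of_real (Fx (int k)) * w ^ k) \<longlonglongrightarrow> w + (w - 1) * (- Ln (1 - w)) - 0"
    unfolding phi_partial by (intro tendsto_intros L P)
  hence "(\<lambda>m. \<Sum>k<m + 2. complex_of_real (Fx (int k)) * w ^ k) \<longlonglongrightarrow> w + (1 - w) * Ln (1 - w)"
    by (simp add: algebra_simps)
  hence "(\<lambda>k. complex_of_real (Fx (int k)) * w ^ k) sums (w + (1 - w) * Ln (1 - w))"
    unfolding sums_def by (rule LIMSEQ_offset)
  thus ?thesis unfolding phi_def by (rule sums_unique[symmetric])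
qed

lemma phi_cont: "continuous_on (cball 0 1) (phi Fx)"
proof -
  have "uniform_limit (cball 0 1) (\<lambda>n w. \<Sum>i<n. complex_of_real (Fx (int i)) * w ^ i)
          (\<lambda>w. suminf (\<lambda>i. complex_of_real (Fx (int i)) * w ^ i)) sequentially"
  proof (rule Weierstrass_m_test_ev[where M="\<lambda>i. Fx (int i)"])
    show "\<forall>\<^sub>F n in sequentially. \<forall>x\<in>cball 0 1. norm (complex_of_real (Fx (int n)) * x ^ n) \<le> Fx (int n)"
      by (intro always_eventually allI ballI)
         (auto simp: norm_mult norm_power Fx_nonneg intro!: mult_left_le power_le_one)
  qed (rule Fx_summable)
  hence "continuous_on (cball 0 1) (\<lambda>w. suminf (\<lambda>i. complex_of_real (Fx (int i)) * w ^ i))"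
    by (rule uniform_limit_theorem[rotated]) (auto intro!: always_eventually continuous_intros)
  thus ?thesis unfolding phi_def by (simp add: fun_eq_iff)
qed

lemma not_nonpos_1minus: "cmod w \<le> 1 \<Longrightarrow> w \<noteq> 1 \<Longrightarrow> 1 - w \<notin> \<real>\<^sub>\<le>\<^sub>0"
proof
  assume a: "cmod w \<le> 1" "w \<noteq> 1" "1 - w \<in> \<real>\<^sub>\<le>\<^sub>0"
  then obtain r where r: "1 - w = of_real r" "r \<le> 0" by (auto simp: nonpos_Reals_def)
  hence "w = 1 - of_real r" by (simp add: algebra_simps)
  hence "cmod w = \<bar>1 - r\<bar>" by (metis norm_of_real of_real_1 of_real_diff)
  thus False using a r by auto
qed

lemma phi_closed:
  fixes w :: complex
  assumes "cmod w \<le> 1" "w \<noteq> 1"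
  shows "phi Fx w = w + (1 - w) * Ln (1 - w)"
proof -
  define S where "S = cball (0::complex) 1 - {1}"
  have cg: "continuous_on S (\<lambda>w. w + (1 - w) * Ln (1 - w))"
    unfolding S_def by (intro continuous_intros) (use not_nonpos_1minus in auto)
  have r: "((\<lambda>r::real. of_real r * w) \<longlongrightarrow> w) (at_left 1)"
    by (auto intro!: tendsto_eq_intros)
  have ev: "\<forall>\<^sub>F r in at_left (1::real). cmod (of_real r * w) < 1 \<and> 0 < r"
  proof -
    have "\<forall>\<^sub>F r in at_left (1::real). 0 < r \<and> r < 1"
      by (rule eventually_mono[OF eventually_at_left_real[of 0 1]]) auto
    thus ?thesis
    proof eventually_elim
      case (elim r)
      have "cmod (of_real r * w) = r * cmod w" using elim by (simp add: norm_mult)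
      also have "\<dots> \<le> r" using elim assms by (simp add: mult_le_cancel_left1)
      finally show ?case using elim by simp
    qed
  qed
  have 1: "((\<lambda>r. phi Fx (of_real r * w)) \<longlongrightarrow> phi Fx w) (at_left 1)"
    by (rule continuous_on_tendsto_compose[OF phi_cont r]) (use assms ev in \<open>auto elim: eventually_mono\<close>)
  have 2: "((\<lambda>r. (\<lambda>w. w + (1 - w) * Ln (1 - w)) (of_real r * w)) \<longlongrightarrow> w + (1 - w) * Ln (1 - w)) (at_left 1)"
    by (rule continuous_on_tendsto_compose[OF cg r]) (use assms ev in \<open>auto simp: S_def elim!: eventually_mono\<close>)
  have 3: "((\<lambda>r. phi Fx (of_real r * w)) \<longlongrightarrow> w + (1 - w) * Ln (1 - w)) (at_left 1)"
    using 2 by (rule Lim_transform_eventually) (use ev in \<open>auto elim!: eventually_mono simp: phi_open\<close>)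
  show ?thesis using tendsto_unique[OF _ 1 3] by simp
qed



lemma Fhat_eq: "Fhat Fx \<xi> = phi Fx (exp (- \<i> * of_real \<xi>))"
proof -
  define w where "w = exp (- \<i> * of_real \<xi>)"
  have nw: "cmod w = 1" unfolding w_def by (simp add: norm_exp_eq_Re)
  have sn: "summable (\<lambda>n. norm (complex_of_real (Fx (int n)) * w ^ n))"
    using Fx_summable by (simp add: norm_mult norm_power nw Fx_nonneg)
  have "(\<lambda>n. complex_of_real (Fx (int n)) * w ^ n) sums phi Fx w"
    unfolding phi_def using summable_norm_cancel[OF sn] by (rule summable_sums)
  moreover have "exp (- \<i> * of_int (int n) * of_real \<xi>) = w ^ n" for n
    unfolding w_def by (subst exp_of_nat_mult[symmetric]) (simp add: algebra_simps)
  ultimately have "((\<lambda>k. complex_of_real (Fx k) * exp (- \<i> * of_int k * of_real \<xi>)) has_sum phi Fx w) UNIV"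
    by (intro int_has_sum) (use sn in \<open>auto simp: Fx_def\<close>)
  thus ?thesis unfolding Fhat_def w_def by (rule infsumI)
qed

definition uu :: "real \<Rightarrow> complex" where "uu \<xi> = 1 - exp (- \<i> * of_real \<xi>)"

lemma Re_uu: "Re (uu \<xi>) = 1 - cos \<xi>" and Im_uu: "Im (uu \<xi>) = sin \<xi>"
  by (simp_all add: uu_def Re_exp Im_exp)

lemma uu_Re_norm: "Re (uu \<xi>) = cmod (uu \<xi>) ^ 2 / 2"
proof -
  have "cmod (uu \<xi>) ^ 2 = (1 - cos \<xi>)^2 + (sin \<xi>)^2"
    by (simp add: cmod_power2 Re_uu Im_uu)
  also have "\<dots> = 2 * (1 - cos \<xi>)"
    using sin_cos_squared_add[of \<xi>] by (simp add: power2_eq_square algebra_simps)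
  finally show ?thesis by (simp add: Re_uu)
qed

lemma uu_nz: "0 < \<bar>\<xi>\<bar> \<Longrightarrow> \<bar>\<xi>\<bar> < pi \<Longrightarrow> uu \<xi> \<noteq> 0"
proof
  assume a: "0 < \<bar>\<xi>\<bar>" "\<bar>\<xi>\<bar> < pi" "uu \<xi> = 0"
  hence "sin \<xi> = 0" using Im_uu[of \<xi>] by simp
  moreover have "sin \<xi> \<noteq> 0"
  proof (cases "\<xi> > 0")
    case True thus ?thesis using sin_gt_zero[of \<xi>] a by auto
  next
    case False thus ?thesis using sin_gt_zero[of "-\<xi>"] a by auto
  qed
  ultimately show False by simp
qed

lemma z_eq:
  assumes "uu \<xi> \<noteq> 0"
  shows "1 - Fhat Fx \<xi> = uu \<xi> * (1 - Ln (uu \<xi>))"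
proof -
  define w where "w = exp (- \<i> * of_real \<xi>)"
  have nw: "cmod w = 1" unfolding w_def by (simp add: norm_exp_eq_Re)
  have "w \<noteq> 1" using assms by (simp add: uu_def w_def)
  hence "phi Fx w = w + (1 - w) * Ln (1 - w)" using nw by (intro phi_closed) auto
  thus ?thesis unfolding Fhat_eq uu_def w_def[symmetric] by (simp add: algebra_simps)
qed

lemma key_bounds:
  fixes u :: complex
  assumes u0: "u \<noteq> 0" and u1: "cmod u < 1" and uR: "Re u = cmod u ^ 2 / 2"
  defines "z \<equiv> u * (1 - Ln u)"
  shows "z \<noteq> 0"
    and "\<bar>Re z\<bar> / cmod z \<le> cmod u / 2 + pi / (1 - ln (cmod u))"
    and "cmod z \<le> cmod u * (1 - ln (cmod u) + pi)"
proof -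
  define a where "a = 1 - Ln u"
  have Rea: "Re a = 1 - ln (cmod u)" unfolding a_def using u0 by simp
  have lnneg: "ln (cmod u) < 0" using u0 u1 by simp
  have Rea1: "Re a \<ge> 1" using Rea lnneg by simp
  have Ima: "\<bar>Im a\<bar> \<le> pi"
    unfolding a_def using mpi_less_Im_Ln[of u] Im_Ln_le_pi[of u] u0 by auto
  have apos: "cmod a \<ge> Re a" by (rule complex_Re_le_cmod)
  hence a0: "cmod a > 0" using Rea1 by linarith
  have up: "cmod u > 0" using u0 by simp
  show "z \<noteq> 0" unfolding z_def a_def[symmetric] using u0 a0 by auto
  have Rez: "Re z = Re u * Re a - Im u * Im a" unfolding z_def a_def[symmetric] by simp
  have "cmod u ^ 2 / 2 \<ge> 0" by simp
  hence Reu0: "Re u \<ge> 0" using uR by linarith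
  have "\<bar>Re z\<bar> \<le> Re u * cmod a + cmod u * pi"
  proof -
    have "\<bar>Re u * Re a\<bar> \<le> Re u * cmod a"
      using Reu0 abs_Re_le_cmod[of a] by (simp add: abs_mult mult_left_mono)
    moreover have "\<bar>Im u * Im a\<bar> \<le> cmod u * pi"
      using abs_Im_le_cmod[of u] Ima by (simp add: abs_mult mult_mono)
    ultimately show ?thesis unfolding Rez by linarith
  qed
  moreover have nz: "cmod z = cmod u * cmod a" unfolding z_def a_def[symmetric] by (simp add: norm_mult)
  ultimately have "\<bar>Re z\<bar> / cmod z \<le> (Re u * cmod a + cmod u * pi) / (cmod u * cmod a)"
    using up a0 by (metis divide_right_mono mult_pos_pos order_less_imp_le)
  also have "\<dots> = cmod u / 2 + pi / cmod a"
    using up a0 uR by (simp add: field_simps power2_eq_square)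
  also have "\<dots> \<le> cmod u / 2 + pi / (1 - ln (cmod u))"
    using apos Rea Rea1 by (simp add: frac_le)
  finally show "\<bar>Re z\<bar> / cmod z \<le> cmod u / 2 + pi / (1 - ln (cmod u))" .
  have "cmod a \<le> \<bar>Re a\<bar> + \<bar>Im a\<bar>" by (rule cmod_le)
  also have "\<dots> \<le> 1 - ln (cmod u) + pi" using Rea Rea1 Ima by simp
  finally show "cmod z \<le> cmod u * (1 - ln (cmod u) + pi)"
    unfolding nz using up by (simp add: mult_left_mono)
qed



lemma uu_tendsto: "(uu \<longlongrightarrow> 0) (at (0::real))"
proof -
  have "((\<lambda>\<xi>::real. 1 - exp (- \<i> * of_real \<xi>)) \<longlongrightarrow> 1 - exp (- \<i> * of_real 0)) (at 0)"
    by (intro tendsto_intros)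
  thus ?thesis unfolding uu_def[abs_def] by simp
qed

lemma ev_good: "\<forall>\<^sub>F \<xi> in at (0::real). uu \<xi> \<noteq> 0 \<and> cmod (uu \<xi>) < 1"
proof -
  have "\<forall>\<^sub>F \<xi> in at (0::real). \<xi> \<noteq> 0 \<and> \<bar>\<xi>\<bar> < pi"
    unfolding eventually_at by (intro exI[of _ pi]) (auto simp: dist_real_def)
  moreover have "\<forall>\<^sub>F \<xi> in at (0::real). cmod (uu \<xi>) < 1"
    using order_tendstoD(2)[OF tendsto_norm_zero[OF uu_tendsto], of 1] by simp
  ultimately show ?thesis
    by eventually_elim (use uu_nz in auto)
qed

lemma uu_filterlim: "filterlim (\<lambda>\<xi>. cmod (uu \<xi>)) (at_right 0) (at (0::real))"
  unfolding filterlim_at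
  using ev_good tendsto_norm_zero[OF uu_tendsto] by (auto elim!: eventually_mono)

lemma lim_g: "((\<lambda>t::real. t / 2 + pi / (1 - ln t)) \<longlongrightarrow> 0) (at_right 0)"
  by real_asymp

lemma lim_h: "((\<lambda>t::real. t * (1 - ln t + pi)) \<longlongrightarrow> 0) (at_right 0)"
  by real_asymp

definition zz :: "real \<Rightarrow> complex" where "zz \<xi> = 1 - Fhat Fx \<xi>"

lemma ev_bounds: "\<forall>\<^sub>F \<xi> in at (0::real). zz \<xi> \<noteq> 0 \<and>
   \<bar>Re (zz \<xi>)\<bar> / cmod (zz \<xi>) \<le> cmod (uu \<xi>) / 2 + pi / (1 - ln (cmod (uu \<xi>))) \<and>
   cmod (zz \<xi>) \<le> cmod (uu \<xi>) * (1 - ln (cmod (uu \<xi>)) + pi)"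
  using ev_good
proof eventually_elim
  case (elim \<xi>)
  have e: "zz \<xi> = uu \<xi> * (1 - Ln (uu \<xi>))" unfolding zz_def using elim by (rule z_eq[OF conjunct1])
  show ?case unfolding e using key_bounds[OF conjunct1[OF elim] conjunct2[OF elim] uu_Re_norm] by blast
qed

lemma zz_ratio: "((\<lambda>\<xi>. Re (zz \<xi>) / cmod (zz \<xi>)) \<longlongrightarrow> 0) (at (0::real))"
proof (rule Lim_null_comparison)
  show "\<forall>\<^sub>F \<xi> in at 0. norm (Re (zz \<xi>) / cmod (zz \<xi>)) \<le> cmod (uu \<xi>) / 2 + pi / (1 - ln (cmod (uu \<xi>)))"
    using ev_bounds by eventually_elim (simp add: abs_divide)
  show "((\<lambda>\<xi>. cmod (uu \<xi>) / 2 + pi / (1 - ln (cmod (uu \<xi>)))) \<longlongrightarrow> 0) (at 0)"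
    using filterlim_compose[OF lim_g uu_filterlim] .
qed

lemma zz_norm: "((\<lambda>\<xi>. cmod (zz \<xi>)) \<longlongrightarrow> 0) (at (0::real))"
proof (rule Lim_null_comparison)
  show "\<forall>\<^sub>F \<xi> in at 0. norm (cmod (zz \<xi>)) \<le> cmod (uu \<xi>) * (1 - ln (cmod (uu \<xi>)) + pi)"
    using ev_bounds by eventually_elim simp
  show "((\<lambda>\<xi>. cmod (uu \<xi>) * (1 - ln (cmod (uu \<xi>)) + pi)) \<longlongrightarrow> 0) (at 0)"
    using filterlim_compose[OF lim_h uu_filterlim] .
qed

lemma abs_Arg_arccos: "z \<noteq> 0 \<Longrightarrow> \<bar>Arg z\<bar> = arccos (Re z / cmod z)"
proof -
  assume z: "z \<noteq> 0"
  have "arccos (cos \<bar>Arg z\<bar>) = \<bar>Arg z\<bar>"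
    using mpi_less_Arg[of z] Arg_le_pi[of z] by (intro arccos_cos) auto
  thus ?thesis using cos_Arg[OF z] by simp
qed

lemma Arg_limit: "((\<lambda>\<xi>. \<bar>Arg (1 - Fhat Fx \<xi>)\<bar>) \<longlongrightarrow> pi / 2) (at (0::real))"
proof -
  have "((\<lambda>\<xi>. arccos (Re (zz \<xi>) / cmod (zz \<xi>))) \<longlongrightarrow> arccos 0) (at (0::real))"
    by (rule isCont_tendsto_compose[OF _ zz_ratio]) (rule isCont_arccos, auto)
  hence "((\<lambda>\<xi>. arccos (Re (zz \<xi>) / cmod (zz \<xi>))) \<longlongrightarrow> pi / 2) (at (0::real))" by simp
  thus ?thesis
  proof (rule Lim_transform_eventually)
    show "\<forall>\<^sub>F \<xi> in at 0. arccos (Re (zz \<xi>) / cmod (zz \<xi>)) = \<bar>Arg (1 - Fhat Fx \<xi>)\<bar>"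
      using ev_bounds by eventually_elim (simp add: abs_Arg_arccos zz_def)
  qed
qed



lemma conv_neg:
  assumes "\<And>k. k < 0 \<Longrightarrow> G k = 0" "k < 0"
  shows "conv Fx G k = 0"
proof -
  have "\<And>j. Fx j * G (k - j) = 0"
    using assms by (case_tac "j < 0") (auto simp: Fx_def)
  thus ?thesis unfolding conv_def by (intro infsum_0) blast
qed

lemma conv_nat:
  assumes "\<And>k. k < 0 \<Longrightarrow> G k = 0"
  shows "conv Fx G (int m) = (\<Sum>i\<le>m. Fx (int i) * G (int (m - i)))"
proof -
  have "conv Fx G (int m) = (\<Sum>\<^sub>\<infinity>j\<in>int ` {..m}. Fx j * G (int m - j))"
    unfolding conv_def
  proof (rule infsum_cong_neutral)
    fix j assume j: "j \<in> UNIV - int ` {..m}"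
    show "Fx j * G (int m - j) = 0"
    proof (cases "j < 0")
      case True thus ?thesis by (simp add: Fx_def)
    next
      case False
      then obtain i where "j = int i" using nonneg_int_cases[of j] by force
      with j have "int m - j < 0" by auto
      thus ?thesis using assms by simp
    qed
  qed auto
  also have "\<dots> = (\<Sum>j\<in>int ` {..m}. Fx j * G (int m - j))" by simp
  also have "\<dots> = (\<Sum>i\<le>m. Fx (int i) * G (int m - int i))"
    by (subst sum.reindex) (auto simp: inj_on_def)
  also have "\<dots> = (\<Sum>i\<le>m. Fx (int i) * G (int (m - i)))"
    by (intro sum.cong) (auto simp: of_nat_diff)
  finally show ?thesis .
qed

abbreviation P where "P n \<equiv> conv_pow Fx n"

lemma phi1: "phi Fx 1 = 1"
proof -
  have "(\<lambda>k. complex_of_real (Fx (int k))) sums complex_of_real 1"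
    using Fx_sums by (rule sums_of_real)
  thus ?thesis unfolding phi_def by (simp add: sums_iff)
qed

lemma P_props:
  "(\<forall>k<0. P n k = 0) \<and> (\<forall>k. 0 \<le> P n k) \<and> summable (\<lambda>k. P n (int k)) \<and>
   (\<forall>w. cmod w \<le> 1 \<longrightarrow> (\<lambda>k. complex_of_real (P n (int k)) * w ^ k) sums (phi Fx w ^ n))"
proof (induction n)
  case 0
  have "(\<lambda>k. complex_of_real (delta 0 (int k)) * w ^ k) sums 1" for w :: complex
  proof -
    have "(\<lambda>k. complex_of_real (delta 0 (int k)) * w ^ k) = (\<lambda>k. if k = 0 then 1 else 0)"
      by (auto simp: delta_def)
    thus ?thesis using sums_single[of 0 "\<lambda>_. 1::complex"] by simp
  qed
  moreover have "summable (\<lambda>k. delta 0 (int k))"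
  proof -
    have "(\<lambda>k. delta 0 (int k)) = (\<lambda>k. if k = 0 then 1 else 0)" by (auto simp: delta_def)
    thus ?thesis using summable_single[of 0 "\<lambda>_. 1::real"] by simp
  qed
  ultimately show ?case by (auto simp: delta_def)
next
  case (Suc n)
  have neg: "\<And>k. k < 0 \<Longrightarrow> P n k = 0" and nn: "\<And>k. 0 \<le> P n k"
    and sm: "summable (\<lambda>k. P n (int k))"
    and gf: "\<And>w. cmod w \<le> 1 \<Longrightarrow> (\<lambda>k. complex_of_real (P n (int k)) * w ^ k) sums (phi Fx w ^ n)"
    using Suc.IH by auto
  have eq: "P (Suc n) (int m) = (\<Sum>i\<le>m. Fx (int i) * P n (int (m - i)))" for m
    using conv_nat[OF neg] by simp
  have neg': "\<forall>k<0. P (Suc n) k = 0" using conv_neg[OF neg] by simp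
  have nn': "\<forall>k. 0 \<le> P (Suc n) k"
    using Fx_nonneg nn unfolding conv_pow.simps conv_def by (auto intro!: infsum_nonneg)
  have "(\<lambda>m. \<Sum>i\<le>m. Fx (int i) * P n (int (m - i))) sums ((\<Sum>k. Fx (int k)) * (\<Sum>k. P n (int k)))"
    by (rule Cauchy_product_sums) (use Fx_summable sm Fx_nonneg nn in auto)
  hence sm': "summable (\<lambda>k. P (Suc n) (int k))" unfolding eq[symmetric] by (rule sums_summable)
  have gf': "(\<lambda>k. complex_of_real (P (Suc n) (int k)) * w ^ k) sums (phi Fx w ^ Suc n)"
    if w: "cmod w \<le> 1" for w
  proof -
    have s1: "summable (\<lambda>k. norm (complex_of_real (Fx (int k)) * w ^ k))"
      by (rule summable_comparison_test'[OF Fx_summable, of 0])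
         (use w Fx_nonneg in \<open>auto simp: norm_mult norm_power intro!: mult_left_le power_le_one\<close>)
    have s2: "summable (\<lambda>k. norm (complex_of_real (P n (int k)) * w ^ k))"
      by (rule summable_comparison_test'[OF sm, of 0])
         (use w nn in \<open>auto simp: norm_mult norm_power intro!: mult_left_le power_le_one\<close>)
    have "(\<lambda>m. \<Sum>i\<le>m. (complex_of_real (Fx (int i)) * w ^ i) * (complex_of_real (P n (int (m - i))) * w ^ (m - i)))
        sums ((\<Sum>k. complex_of_real (Fx (int k)) * w ^ k) * (\<Sum>k. complex_of_real (P n (int k)) * w ^ k))"
      by (rule Cauchy_product_sums[OF s1 s2])
    moreover have "(\<Sum>k. complex_of_real (Fx (int k)) * w ^ k) = phi Fx w" by (simp add: phi_def)
    moreover have "(\<Sum>k. complex_of_real (P n (int k)) * w ^ k) = phi Fx w ^ n"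
      using gf[OF w] by (simp add: sums_iff)
    moreover have "(\<Sum>i\<le>m. (complex_of_real (Fx (int i)) * w ^ i) * (complex_of_real (P n (int (m - i))) * w ^ (m - i)))
        = complex_of_real (P (Suc n) (int m)) * w ^ m" for m
    proof -
      have "(\<Sum>i\<le>m. (complex_of_real (Fx (int i)) * w ^ i) * (complex_of_real (P n (int (m - i))) * w ^ (m - i)))
          = (\<Sum>i\<le>m. complex_of_real (Fx (int i) * P n (int (m - i))) * w ^ m)"
        by (intro sum.cong refl) (auto simp: power_add[symmetric])
      also have "\<dots> = complex_of_real (P (Suc n) (int m)) * w ^ m"
        unfolding eq by (simp add: sum_distrib_right)
      finally show ?thesis .
    qed
    ultimately show ?thesis by (simp add: mult.commute)
  qed
  show ?case using neg' nn' sm' gf' by blast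
qed



lemma P_neg: "k < 0 \<Longrightarrow> P n k = 0" and P_nn: "0 \<le> P n k" and P_sm: "summable (\<lambda>k. P n (int k))"
  and P_gf: "cmod w \<le> 1 \<Longrightarrow> (\<lambda>k. complex_of_real (P n (int k)) * w ^ k) sums (phi Fx w ^ n)"
  using P_props[of n] by auto

lemma diff_bound:
  assumes w: "cmod w = 1"
  shows "cmod (phi Fx w ^ n - phi Fx w ^ Suc n) \<le> (\<Sum>\<^sub>\<infinity>k\<in>UNIV. \<bar>P n k - P (Suc n) k\<bar>)"
proof -
  define G where "G k = P n k - P (Suc n) k" for k
  have smG: "summable (\<lambda>m. \<bar>G (int m)\<bar>)"
  proof (rule summable_comparison_test'[OF summable_add[OF P_sm[of n] P_sm[of "Suc n"]], of 0])
    fix m :: nat show "norm \<bar>G (int m)\<bar> \<le> P n (int m) + P (Suc n) (int m)"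
      using P_nn[of n "int m"] P_nn[of "Suc n" "int m"] by (simp add: G_def)
  qed
  have "((\<lambda>k. \<bar>G k\<bar>) has_sum (\<Sum>m. \<bar>G (int m)\<bar>)) UNIV"
    by (rule int_has_sum) (use smG P_neg[of _ n] P_neg[of _ "Suc n"] in \<open>auto simp: G_def intro: summable_sums\<close>)
  hence inf: "(\<Sum>\<^sub>\<infinity>k\<in>UNIV. \<bar>G k\<bar>) = (\<Sum>m. \<bar>G (int m)\<bar>)" by (rule infsumI)
  have "(\<lambda>m. complex_of_real (P n (int m)) * w ^ m - complex_of_real (P (Suc n) (int m)) * w ^ m)
      sums (phi Fx w ^ n - phi Fx w ^ Suc n)"
    using w by (intro sums_diff P_gf) auto
  hence s: "(\<lambda>m. complex_of_real (G (int m)) * w ^ m) sums (phi Fx w ^ n - phi Fx w ^ Suc n)"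
    by (simp add: G_def algebra_simps)
  have nrm: "norm (complex_of_real (G (int m)) * w ^ m) = \<bar>G (int m)\<bar>" for m
    using w by (simp add: norm_mult norm_power)
  have "cmod (phi Fx w ^ n - phi Fx w ^ Suc n) = norm (\<Sum>m. complex_of_real (G (int m)) * w ^ m)"
    using s by (simp add: sums_iff)
  also have "\<dots> \<le> (\<Sum>m. norm (complex_of_real (G (int m)) * w ^ m))"
    by (rule summable_norm) (simp add: nrm smG)
  also have "\<dots> = (\<Sum>m. \<bar>G (int m)\<bar>)" by (simp add: nrm)
  finally show ?thesis using inf by (simp add: G_def)
qed

lemma contra:
  fixes z :: complex and C :: real
  defines "M \<equiv> 2 * \<bar>C\<bar> + 2"
  assumes z0: "z \<noteq> 0" and zs: "cmod z \<le> 1/4" and rz: "\<bar>Re z\<bar> / cmod z \<le> 1 / (4 * M)"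
    and bd: "\<And>n::nat. n \<ge> 1 \<Longrightarrow> real n * cmod ((1 - z) ^ n * z) \<le> C"
  shows False
proof -
  define t where "t = cmod z"
  define r where "r = Re z"
  have t0: "t > 0" using z0 by (simp add: t_def)
  have Mp: "M > 0" unfolding M_def by simp
  define n where "n = nat \<lceil>M / t\<rceil>"
  have n1: "real n \<ge> M / t" unfolding n_def by linarith
  have n2: "real n < M / t + 1" unfolding n_def
    using t0 Mp by (simp add: of_nat_nat) linarith
  have "M / t > 0" using t0 Mp by simp
  hence nge: "n \<ge> 1" using n1 by (cases n) auto
  have nt: "real n * t \<ge> M" using n1 t0 by (simp add: divide_le_eq)
  have rt: "\<bar>r\<bar> \<le> t" unfolding r_def t_def by (rule abs_Re_le_cmod)
  have rM: "\<bar>r\<bar> / t \<le> 1 / (4 * M)" using rz by (simp add: r_def t_def)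
  have "real n * \<bar>r\<bar> \<le> (M / t + 1) * \<bar>r\<bar>" using n2 by (intro mult_right_mono) auto
  also have "\<dots> = M * (\<bar>r\<bar> / t) + \<bar>r\<bar>" by (simp add: algebra_simps)
  also have "\<dots> \<le> M * (1 / (4 * M)) + t" using rM rt Mp by (intro add_mono mult_left_mono) auto
  also have "\<dots> = 1/4 + t" using Mp by simp
  finally have nr: "real n * \<bar>r\<bar> \<le> 1/2" using zs by (simp add: t_def)
  have r1: "\<bar>r\<bar> \<le> 1/4" using rt zs by (simp add: t_def)
  have "1 + real n * (- r) \<le> (1 + (- r)) ^ n"
    by (rule Bernoulli_inequality) (use r1 in auto)
  moreover have "real n * r \<le> real n * \<bar>r\<bar>" by (intro mult_left_mono) auto
  ultimately have b1: "1/2 \<le> (1 - r) ^ n" using nr by simp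
  have "1 - r \<le> cmod (1 - z)" using complex_Re_le_cmod[of "1 - z"] by (simp add: r_def)
  hence "(1 - r) ^ n \<le> cmod (1 - z) ^ n" using r1 by (intro power_mono) auto
  hence "1/2 * t \<le> cmod (1 - z) ^ n * t" using b1 t0 by (intro mult_right_mono) auto
  hence "real n * (1/2 * t) \<le> real n * cmod ((1 - z) ^ n * z)"
    by (intro mult_left_mono) (auto simp: norm_mult norm_power t_def)
  also have "\<dots> \<le> C" using bd nge by simp
  finally have "M / 2 \<le> C" using nt by simp
  thus False unfolding M_def by simp
qed

lemma not_classA: "Fx \<notin> classA"
proof
  assume "Fx \<in> classA"
  then obtain C where C: "\<And>n::nat. n \<ge> 1 \<Longrightarrow> real n * (\<Sum>\<^sub>\<infinity>k\<in>UNIV. \<bar>P n k - P (Suc n) k\<bar>) \<le> C"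
    unfolding classA_def by auto
  define M where "M = 2 * \<bar>C\<bar> + 2"
  have Mp: "M > 0" unfolding M_def by simp
  have "\<forall>\<^sub>F \<xi> in at (0::real). (zz \<xi> \<noteq> 0) \<and> cmod (zz \<xi>) < 1/4 \<and> \<bar>Re (zz \<xi>) / cmod (zz \<xi>)\<bar> < 1 / (4 * M)"
  proof -
    have e1: "\<forall>\<^sub>F \<xi> in at (0::real). cmod (zz \<xi>) < 1/4"
      using order_tendstoD(2)[OF zz_norm, of "1/4"] by simp
    have e2: "\<forall>\<^sub>F \<xi> in at (0::real). dist (Re (zz \<xi>) / cmod (zz \<xi>)) 0 < 1 / (4 * M)"
      using tendstoD[OF zz_ratio, of "1/(4*M)"] Mp by simp
    show ?thesis using ev_bounds e1 e2
      by eventually_elim (simp add: dist_real_def)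
  qed
  then obtain \<xi> :: real where xi: "zz \<xi> \<noteq> 0" "cmod (zz \<xi>) < 1/4" "\<bar>Re (zz \<xi>) / cmod (zz \<xi>)\<bar> < 1 / (4 * M)"
    using eventually_happens'[OF at_neq_bot] by blast
  define w where "w = exp (- \<i> * of_real \<xi>)"
  have nw: "cmod w = 1" unfolding w_def by (simp add: norm_exp_eq_Re)
  have pw: "phi Fx w = 1 - zz \<xi>" unfolding zz_def w_def Fhat_eq by simp
  show False
  proof (rule contra[of "zz \<xi>" C])
    fix n :: nat assume n: "n \<ge> 1"
    have "(1 - zz \<xi>) ^ n * zz \<xi> = phi Fx w ^ n - phi Fx w ^ Suc n"
      unfolding pw by (simp add: algebra_simps)
    hence "real n * cmod ((1 - zz \<xi>) ^ n * zz \<xi>) \<le> real n * (\<Sum>\<^sub>\<infinity>k\<in>UNIV. \<bar>P n k - P (Suc n) k\<bar>)"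
      using diff_bound[OF nw, of n] by (intro mult_left_mono) auto
    also have "\<dots> \<le> C" using C n by blast
    finally show "real n * cmod ((1 - zz \<xi>) ^ n * zz \<xi>) \<le> C" .
  qed (use xi in \<open>auto simp: M_def abs_divide\<close>)
qed

lemma no_theta:
  "\<not> (\<exists>\<theta>. 0 < \<theta> \<and> \<theta> < pi / 2 \<and>
          (\<forall>w. cmod w \<le> 1 \<longrightarrow>
             phi Fx w \<in> ball 0 1 \<union> {1} \<and> 1 - phi Fx w \<in> Lambda_bar \<theta>))"
proof
  assume "\<exists>\<theta>. 0 < \<theta> \<and> \<theta> < pi / 2 \<and>
          (\<forall>w. cmod w \<le> 1 \<longrightarrow>
             phi Fx w \<in> ball 0 1 \<union> {1} \<and> 1 - phi Fx w \<in> Lambda_bar \<theta>)"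
  then obtain \<theta> where th: "0 < \<theta>" "\<theta> < pi/2"
    and H: "\<And>w. cmod w \<le> 1 \<Longrightarrow> 1 - phi Fx w \<in> Lambda_bar \<theta>" by blast
  have "\<forall>\<^sub>F \<xi> in at (0::real). \<theta> < \<bar>Arg (1 - Fhat Fx \<xi>)\<bar>"
    using order_tendstoD(1)[OF Arg_limit th(2)] .
  then obtain \<xi> :: real where xi: "\<theta> < \<bar>Arg (1 - Fhat Fx \<xi>)\<bar>"
    using eventually_happens'[OF at_neq_bot] by blast
  define w where "w = exp (- \<i> * of_real \<xi>)"
  have nw: "cmod w = 1" unfolding w_def by (simp add: norm_exp_eq_Re)
  have "1 - Fhat Fx \<xi> \<in> Lambda_bar \<theta>" using H[of w] nw by (simp add: Fhat_eq w_def)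
  thus False using xi th by (auto simp: Lambda_bar_def Arg_zero)
qed

theorem theorem6p2:
  shows "\<exists>F. PZplus F \<and> aperiodic F
    \<and> \<not> summable (\<lambda>k::nat. real k * F (int k))
    \<and> ((\<lambda>\<xi>. \<bar>Arg (1 - Fhat F \<xi>)\<bar>) \<longlongrightarrow> pi / 2) (at 0)
    \<and> \<not> (\<exists>\<theta>. 0 < \<theta> \<and> \<theta> < pi / 2 \<and>
          (\<forall>w. cmod w \<le> 1 \<longrightarrow>
             phi F w \<in> ball 0 1 \<union> {1} \<and> 1 - phi F w \<in> Lambda_bar \<theta>))
    \<and> F \<notin> classA"
  using PZplus_Fx aperiodic_Fx Fx_not_summable Arg_limit no_theta not_classA by blast

end
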